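(* Let $A\in\mathbb{R}^{n\times n}$, $B\in\mathbb{R}^{n\times m}$, $Q\succeq0$, $R\succ0$, with $(A,B)$ stabilizable and $Q=C^TC$ with $(A,C)$ detectable, and let $\Lambda=\mathrm{diag}(Q,R)$. Let $S,H$ be off-policy data matrices with $S\succ0$ (see context). Define $P_0=0$ and, for $k\ge0$, let $P_{k+1}\in\mathbb{S}^{n+m}$ solve $$SP_{k+1}S=S\Lambda S+H\big(P_{k,11}-P_{k,12}P_{k,22}^{-1}P_{k,12}^T\big)H^T,$$ where the Schur-complement term is taken to be $0$ when $k=0$ (so $P_1=\Lambda$). Then $P_k\to P^*$ as $k\to\infty$, where $$P^*=\begin{bmatrix}Q+A^TX^*A & A^TX^*B\\ B^TX^*A & R+B^TX^*B\end{bmatrix}$$ and $X^*$ is the unique positive semidefinite solution of $X=A^TXA-A^TXB(R+B^TXB)^{-1}B^TXA+Q$.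
   Context: Off-policy data: along one trajectory of $x(k+1)=Ax(k)+Bu(k)$ from $x(0)=z$ with arbitrary inputs $u(0),\dots,u(N-1)$, $S=\frac1N\sum_{k=0}^{N-1}[x(k);u(k)][x(k);u(k)]^T$ and $H=\frac1N\sum_{k=0}^{N-1}[x(k);u(k)]x(k+1)^T$. For $P\in\mathbb{S}^{n+m}$, $P_{11}\in\mathbb{R}^{n\times n}$, $P_{12}\in\mathbb{R}^{n\times m}$, $P_{22}\in\mathbb{R}^{m\times m}$ denote the blocks of $P=\begin{bmatrix}P_{11}&P_{12}\\P_{12}^T&P_{22}\end{bmatrix}$. *)

theory Defs
  imports "HOL-Analysis.Analysis"
begin

definition psd :: "real^'n^'n \<Rightarrow> bool" where
  "psd M \<longleftrightarrow> transpose M = M \<and> (\<forall>x. 0 \<le> x \<bullet> (M *v x))"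

definition pd :: "real^'n^'n \<Rightarrow> bool" where
  "pd M \<longleftrightarrow> transpose M = M \<and> (\<forall>x. x \<noteq> 0 \<longrightarrow> 0 < x \<bullet> (M *v x))"

definition schur_stable :: "real^'n^'n \<Rightarrow> bool" where
  "schur_stable M \<longleftrightarrow>
     (\<forall>(l::complex) (v::complex^'n). v \<noteq> 0 \<and> (map_matrix complex_of_real M) *v v = l *s v
        \<longrightarrow> cmod l < 1)"

definition stabilizable :: "real^'n^'n \<Rightarrow> real^'m^'n \<Rightarrow> bool" where
  "stabilizable A B \<longleftrightarrow> (\<exists>K::real^'n^'m. schur_stable (A + B ** K))"

definition detectable :: "real^'n^'n \<Rightarrow> real^'n^'p \<Rightarrow> bool" where
  "detectable A C \<longleftrightarrow> (\<exists>L::real^'p^'n. schur_stable (A + L ** C))"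

definition blockmat :: "real^'n::finite^'n \<Rightarrow> real^'m::finite^'n \<Rightarrow> real^'n^'m \<Rightarrow> real^'m^'m
    \<Rightarrow> real^('n + 'm)^('n + 'm)" where
  "blockmat M11 M12 M21 M22 = (\<chi> i j. case i of
       Inl a \<Rightarrow> (case j of Inl b \<Rightarrow> M11 $ a $ b | Inr b \<Rightarrow> M12 $ a $ b)
     | Inr a \<Rightarrow> (case j of Inl b \<Rightarrow> M21 $ a $ b | Inr b \<Rightarrow> M22 $ a $ b))"

definition blk11 :: "real^('n::finite + 'm::finite)^('n + 'm) \<Rightarrow> real^'n^'n" where
  "blk11 P = (\<chi> a b. P $ Inl a $ Inl b)"
definition blk12 :: "real^('n::finite + 'm::finite)^('n + 'm) \<Rightarrow> real^'m^'n" where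
  "blk12 P = (\<chi> a b. P $ Inl a $ Inr b)"
definition blk22 :: "real^('n::finite + 'm::finite)^('n + 'm) \<Rightarrow> real^'m^'m" where
  "blk22 P = (\<chi> a b. P $ Inr a $ Inr b)"

definition stackv :: "real^'n::finite \<Rightarrow> real^'m::finite \<Rightarrow> real^('n + 'm)" where
  "stackv x u = (\<chi> i. case i of Inl a \<Rightarrow> x $ a | Inr b \<Rightarrow> u $ b)"

definition outer :: "real^'a \<Rightarrow> real^'b \<Rightarrow> real^'b^'a" where
  "outer v w = (\<chi> i j. v $ i * w $ j)"

end

theory Submission
  imports Defs "HOL-Computational_Algebra.Fundamental_Theorem_Algebra"
begin


definition pw :: "'a::semiring_1^'n^'n \<Rightarrow> nat \<Rightarrow> 'a^'n \<Rightarrow> 'a^'n" where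
  "pw M t = ((*v) M) ^^ t"

lemma pw_0[simp]: "pw M 0 x = x" by (simp add: pw_def)
lemma pw_Suc: "pw M (Suc t) x = M *v pw M t x" by (simp add: pw_def)
lemma pw_Suc': "pw M (Suc t) x = pw M t (M *v x)" by (simp only: pw_def funpow_Suc_right comp_def)

lemma mv_smult: "(M::'a::comm_semiring_1^'n^'m) *v (c *s x) = c *s (M *v x)"
  by (simp add: vec_eq_iff matrix_vector_mult_def sum_distrib_left mult_ac)

lemma pw_add: "pw M t (x + y) = pw M t x + pw M t y"
  by (induct t) (simp_all add: pw_Suc matrix_vector_right_distrib)
lemma pw_zero[simp]: "pw M t 0 = 0"
  by (induct t) (simp_all add: pw_Suc)
lemma pw_smult: "pw (M::'a::comm_semiring_1^'n^'n) t (c *s x) = c *s pw M t x"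
  by (induct t) (simp_all add: pw_Suc mv_smult)
lemma pw_diff: "pw (M::'a::comm_ring_1^'n^'n) t (x - y) = pw M t x - pw M t y"
  by (induct t) (simp_all add: pw_Suc matrix_vector_mult_diff_distrib)

lemma seq_contract:
  fixes s e :: "nat \<Rightarrow> real"
  assumes s0: "\<And>t. 0 \<le> s t" and r0: "0 \<le> \<rho>" and r1: "\<rho> < 1"
    and step: "\<And>t. s (Suc t) \<le> \<rho> * s t + e t" and e: "e \<longlonglongrightarrow> 0"
  shows "s \<longlonglongrightarrow> 0"
proof (rule LIMSEQ_I)
  fix \<epsilon> :: real assume ep: "0 < \<epsilon>"
  have "0 < \<epsilon> * (1 - \<rho>) / 2" using ep r1 by simp
  from LIMSEQ_D[OF e this] obtain T where T: "\<And>t. t \<ge> T \<Longrightarrow> norm (e t) < \<epsilon> * (1 - \<rho>) / 2"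
    by auto
  have bound: "s (T + k) \<le> \<rho> ^ k * s T + \<epsilon> / 2" for k
  proof (induct k)
    case 0 then show ?case using ep by simp
  next
    case (Suc k)
    have "e (T + k) \<le> \<epsilon> * (1 - \<rho>) / 2" using T[of "T+k"] by auto
    then have "s (T + Suc k) \<le> \<rho> * s (T + k) + \<epsilon> * (1 - \<rho>) / 2"
      using step[of "T+k"] by simp
    also have "\<dots> \<le> \<rho> * (\<rho> ^ k * s T + \<epsilon> / 2) + \<epsilon> * (1 - \<rho>) / 2"
      using Suc r0 by (simp add: mult_left_mono)
    also have "\<dots> = \<rho> ^ Suc k * s T + \<epsilon> / 2" by (simp add: field_simps)
    finally show ?case .
  qed
  have "(\<lambda>k. \<rho> ^ k * s T) \<longlonglongrightarrow> 0"
    using r0 r1 by (intro tendsto_mult_left_zero LIMSEQ_power_zero) auto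
  from LIMSEQ_D[OF this half_gt_zero[OF ep]] obtain K where
    K: "\<And>k. k \<ge> K \<Longrightarrow> norm (\<rho> ^ k * s T) < \<epsilon> / 2" by (auto simp del: norm_mult)
  show "\<exists>no. \<forall>n\<ge>no. norm (s n - 0) < \<epsilon>"
  proof (intro exI allI impI)
    fix n assume n: "n \<ge> T + K"
    define k where "k = n - T"
    have k: "n = T + k" "k \<ge> K" using n unfolding k_def by auto
    have "s n \<le> \<rho> ^ k * s T + \<epsilon> / 2" using bound k by simp
    also have "\<dots> < \<epsilon>" using K[OF k(2)] by simp
    finally show "norm (s n - 0) < \<epsilon>" using s0[of n] by simp
  qed
qed



definition ev :: "complex^'n^'n \<Rightarrow> complex poly \<Rightarrow> complex^'n \<Rightarrow> complex^'n" where
  "ev M p = fold_coeffs (\<lambda>a f v. a *s v + M *v f v) p (\<lambda>v. 0)"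

lemma ev_0[simp]: "ev M 0 v = 0" by (simp add: ev_def)

lemma ev_pCons[simp]: "ev M (pCons a p) v = a *s v + M *v ev M p v"
proof (cases "p = 0")
  case True
  then show ?thesis
    by (cases "a = 0") (simp_all add: ev_def)
next
  case False
  then show ?thesis by (simp add: ev_def)
qed

lemma ev_add: "ev M (p + q) v = ev M p v + ev M q v"
proof (induction p arbitrary: q)
  case 0 then show ?case by simp
next
  case (pCons a p)
  then show ?case
    by (cases q) (simp add: vector_sadd_rdistrib matrix_vector_right_distrib algebra_simps)
qed

lemma ev_smult: "ev M (smult c p) v = c *s ev M p v"
  by (induct p) (simp_all add: vector_add_ldistrib vector_smult_assoc mv_smult)

lemma ev_vadd: "ev M p (x + y) = ev M p x + ev M p y"
  by (induct p) (simp_all add: vector_add_ldistrib matrix_vector_right_distrib algebra_simps)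

lemma ev_vsmult: "ev M p (c *s x) = c *s ev M p x"
  by (induct p) (simp_all add: vector_add_ldistrib vector_smult_assoc mv_smult mult.commute)

lemma ev_vzero[simp]: "ev M p 0 = 0"
  by (induct p) simp_all

lemma ev_mult: "ev M (p * q) v = ev M p (ev M q v)"
  by (induct p) (simp_all add: ev_add ev_smult)

lemma ev_monom: "ev M (monom c i) v = c *s pw M i v"
  by (induct i) (simp_all add: monom_0 monom_Suc pw_Suc mv_smult)

lemma ev_sum: "ev M (\<Sum>i\<in>I. f i) v = (\<Sum>i\<in>I. ev M (f i) v)"
  by (induct I rule: infinite_finite_induct) (simp_all add: ev_add)

lemma ev_lin: "ev M [:-z, 1:] v = M *v v - z *s v"
  by (simp add: vector_smult_lneg)

lemma norm_smult_vec: "norm ((c::complex) *s (x::complex^'n)) = cmod c * norm x"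
proof -
  have "norm (c *s x) = L2_set (\<lambda>i. cmod c * norm (x $ i)) UNIV"
    unfolding norm_vec_def by (simp only: vector_smult_component norm_mult)
  also have "\<dots> = cmod c * norm x"
    unfolding norm_vec_def by (rule L2_set_right_distrib[symmetric]) simp
  finally show ?thesis .
qed

lemma annihilate:
  assumes eig: "\<And>l w. w \<noteq> 0 \<Longrightarrow> M *v w = l *s w \<Longrightarrow> cmod l < 1"
  shows "p \<noteq> 0 \<Longrightarrow> ev M p v = 0 \<Longrightarrow> (\<lambda>t. pw M t v) \<longlonglongrightarrow> 0"
proof (induct "degree p" arbitrary: p v rule: less_induct)
  case less
  show ?case
  proof (cases "degree p = 0")
    case True
    then have "p = [:coeff p 0:]" by (metis degree_0_id)
    with less.prems have "coeff p 0 \<noteq> 0" "coeff p 0 *s v = 0"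
      by (metis pCons_0_0, metis add.right_neutral ev_0 ev_pCons matrix_vector_mult_0_right)
    then have "v = 0" by simp
    then show ?thesis by simp
  next
    case False
    then have "\<not> constant (poly p)" by (simp add: constant_degree)
    then obtain z where "poly p z = 0" using fundamental_theorem_of_algebra by blast
    then obtain q where pq: "p = [:-z, 1:] * q" by (metis dvdE poly_eq_0_iff_dvd)
    have q0: "q \<noteq> 0" using less.prems pq by auto
    have dq: "degree q < degree p" using degree_mult_eq[of "[:-z,1:]" q] q0 pq by (simp del: mult_pCons_left)
    define u where "u = ev M q v"
    have "ev M p v = ev M [:-z, 1:] u" unfolding pq ev_mult u_def ..
    then have Mu: "M *v u - z *s u = 0" using less.prems by (simp only: ev_lin)
    show ?thesis
    proof (cases "u = 0")
      case True
      then show ?thesis using less.hyps[OF dq q0] u_def by simp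
    next
      case False
      have "M *v u = z *s u" using Mu by simp
      from eig[OF False this] have z1: "cmod z < 1" .
      define w where "w = M *v v - z *s v"
      have "ev M q w = ev M (q * [:-z, 1:]) v" by (simp only: ev_mult ev_lin w_def)
      also have "\<dots> = ev M p v" unfolding pq by (simp only: mult.commute)
      also have "\<dots> = 0" using less.prems by simp
      finally have wt: "(\<lambda>t. pw M t w) \<longlonglongrightarrow> 0" using less.hyps[OF dq q0] by simp
      have step: "pw M (Suc t) v = pw M t w + z *s pw M t v" for t
      proof -
        have "M *v v = w + z *s v" by (simp add: w_def)
        then show ?thesis by (simp add: pw_Suc' pw_add pw_smult)
      qed
      have "(\<lambda>t. norm (pw M t v)) \<longlonglongrightarrow> 0"
      proof (rule seq_contract[where \<rho> = "cmod z" and e = "\<lambda>t. norm (pw M t w)"])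
        show "norm (pw M (Suc t) v) \<le> cmod z * norm (pw M t v) + norm (pw M t w)" for t
          unfolding step using norm_triangle_ineq[of "pw M t w" "z *s pw M t v"]
          unfolding norm_smult_vec by linarith
        show "(\<lambda>t. norm (pw M t w)) \<longlonglongrightarrow> 0" using wt by (simp add: tendsto_norm_zero)
      qed (use z1 in auto)
      then show ?thesis by (simp add: tendsto_norm_zero_iff)
    qed
  qed
qed



lemma pw_to_zero:
  fixes M :: "complex^'n^'n"
  assumes eig: "\<And>l w. w \<noteq> 0 \<Longrightarrow> M *v w = l *s w \<Longrightarrow> cmod l < 1"
  shows "(\<lambda>t. pw M t v) \<longlonglongrightarrow> 0"
proof -
  define N where "N = CARD('n)"
  define f where "f i = pw M i v" for i
  have "\<exists>p. p \<noteq> 0 \<and> ev M p v = 0"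
  proof (cases "inj_on f {..N}")
    case True
    let ?S = "f ` {..N}"
    have fin: "finite ?S" by simp
    have card: "card ?S = Suc N" using True by (simp add: card_image)
    have "vec.dim ?S \<le> vec.dim (UNIV :: (complex^'n) set)" by (rule vec.dim_subset) simp
    also have "\<dots> = CARD('n)" by (rule vec_dim_card)
    finally have "vec.dim ?S < card ?S" using card N_def by simp
    then have "vec.dependent ?S" by (intro vec.dependent_biggerset_general)
    then obtain u where u: "\<exists>w\<in>?S. u w \<noteq> 0" "(\<Sum>w\<in>?S. u w *s w) = 0"
      using vec.dependent_finite[OF fin] by auto
    define p where "p = (\<Sum>i\<le>N. monom (u (f i)) i)"
    have "ev M p v = (\<Sum>i\<le>N. u (f i) *s f i)" by (simp add: p_def ev_sum ev_monom f_def)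
    also have "\<dots> = (\<Sum>w\<in>?S. u w *s w)" by (simp add: sum.reindex[OF True])
    also have "\<dots> = 0" by (rule u(2))
    finally have e: "ev M p v = 0" .
    from u(1) obtain i where i: "i \<le> N" "u (f i) \<noteq> 0" by auto
    have "coeff p i = u (f i)" using i(1) by (simp add: p_def coeff_sum_monom)
    then have "p \<noteq> 0" using i(2) by auto
    with e show ?thesis by blast
  next
    case False
    then obtain i j where ij: "i \<le> N" "j \<le> N" "i \<noteq> j" "f i = f j" unfolding inj_on_def by auto
    define p where "p = (monom 1 j + monom (-1) i :: complex poly)"
    have "coeff p j = 1" using ij by (simp add: p_def)
    then have "p \<noteq> 0" by auto
    moreover have "ev M p v = 0" using ij(4)
      by (simp add: p_def ev_add ev_monom f_def vector_smult_lneg)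
    ultimately show ?thesis by blast
  qed
  then obtain p where "p \<noteq> 0" "ev M p v = 0" by blast
  from annihilate[OF eig this] show ?thesis .
qed

definition cv :: "real^'n \<Rightarrow> complex^'n" where "cv x = (\<chi> i. complex_of_real (x $ i))"

lemma cv_mv: "map_matrix complex_of_real M *v cv x = cv (M *v x)"
  by (simp add: vec_eq_iff cv_def matrix_vector_mult_def)

lemma cv_pw: "pw (map_matrix complex_of_real M) t (cv x) = cv (pw M t x)"
  by (induct t) (simp_all add: pw_Suc cv_mv)

lemma norm_cv: "norm (cv x) = norm x"
  unfolding norm_vec_def cv_def by simp

lemma schur_pw:
  assumes "schur_stable M"
  shows "(\<lambda>t. pw M t x) \<longlonglongrightarrow> 0"
proof -
  have "(\<lambda>t. pw (map_matrix complex_of_real M) t (cv x)) \<longlonglongrightarrow> 0"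
    by (rule pw_to_zero) (use assms in \<open>auto simp: schur_stable_def\<close>)
  then have "(\<lambda>t. norm (cv (pw M t x))) \<longlonglongrightarrow> 0"
    unfolding cv_pw by (simp add: tendsto_norm_zero)
  then show ?thesis by (simp add: norm_cv tendsto_norm_zero_iff)
qed

lemma pw_sum: "pw M t (\<Sum>i\<in>I. f i) = (\<Sum>i\<in>I. pw M t (f i))"
  by (induct I rule: infinite_finite_induct) (simp_all add: pw_add)

lemma pw_bound_sigma:
  fixes M :: "real^'n^'n"
  shows "norm (pw M t z) \<le> norm z * (\<Sum>i\<in>UNIV. norm (pw M t (axis i 1)))"
proof -
  have "pw M t z = pw M t (\<Sum>i\<in>UNIV. z $ i *s axis i 1)" by (simp add: basis_expansion)
  also have "\<dots> = (\<Sum>i\<in>UNIV. z $ i *s pw M t (axis i 1))" by (simp add: pw_sum pw_smult)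
  finally have eq: "pw M t z = (\<Sum>i\<in>UNIV. z $ i *s pw M t (axis i 1))" .
  have "norm (pw M t z) \<le> (\<Sum>i\<in>UNIV. norm (z $ i *s pw M t (axis i 1)))"
    unfolding eq by (rule norm_sum)
  also have "\<dots> = (\<Sum>i\<in>UNIV. \<bar>z $ i\<bar> * norm (pw M t (axis i 1)))"
    by (simp add: scalar_mult_eq_scaleR)
  also have "\<dots> \<le> (\<Sum>i\<in>UNIV. norm z * norm (pw M t (axis i 1)))"
    by (intro sum_mono mult_right_mono component_le_norm_cart) auto
  finally show ?thesis by (simp add: sum_distrib_left)
qed

lemma contraction_norm:
  fixes M :: "real^'n^'n"
  assumes pt: "\<And>x. (\<lambda>t. pw M t x) \<longlonglongrightarrow> 0"
  obtains \<rho> K and nn :: "real^'n \<Rightarrow> real" where "0 \<le> \<rho>" "\<rho> < 1" "0 \<le> K"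
    "\<And>z. norm z \<le> nn z" "\<And>z. nn z \<le> K * norm z" "\<And>z. nn (M *v z) \<le> \<rho> * nn z"
    "\<And>x y. nn (x + y) \<le> nn x + nn y"
proof -
  define \<sigma> where "\<sigma> t = (\<Sum>i\<in>UNIV. norm (pw M t (axis i 1 :: real^'n)))" for t
  have "\<sigma> \<longlonglongrightarrow> (\<Sum>i\<in>(UNIV::'n set). 0)"
    unfolding \<sigma>_def by (intro tendsto_sum tendsto_norm_zero pt)
  then have s0: "\<sigma> \<longlonglongrightarrow> 0" by simp
  then have "Bseq \<sigma>" by (rule convergent_imp_Bseq[OF convergentI])
  then obtain K0 where K0: "\<And>t. norm (\<sigma> t) \<le> K0" using BseqE by metis
  define c where "c = max 1 K0"
  have c1: "c \<ge> 1" by (simp add: c_def)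
  have sig_c: "\<sigma> t \<le> c" for t using K0[of t] by (simp add: c_def)
  from LIMSEQ_D[OF s0, of "1/2"] obtain T0 where T0: "\<And>t. t \<ge> T0 \<Longrightarrow> norm (\<sigma> t - 0) < 1/2" by auto
  define T where "T = Suc T0"
  have T1: "T \<ge> 1" by (simp add: T_def)
  have sT: "\<sigma> T \<le> 1/2" using T0[of T] by (simp add: T_def)
  have bnd: "norm (pw M t z) \<le> norm z * \<sigma> t" for t z unfolding \<sigma>_def by (rule pw_bound_sigma)
  have bc: "norm (pw M t z) \<le> c * norm z" for t z
  proof -
    have "norm z * \<sigma> t \<le> norm z * c" using sig_c[of t] by (intro mult_left_mono) auto
    then show ?thesis using bnd[of t z] by (simp add: mult.commute)
  qed
  have bT: "norm (pw M T z) \<le> norm z / 2" for z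
  proof -
    have "norm z * \<sigma> T \<le> norm z * (1/2)" using sT by (intro mult_left_mono) auto
    then show ?thesis using bnd[of T z] by simp
  qed
  define nn where "nn z = (\<Sum>s<T. norm (pw M s z))" for z
  define \<rho> where "\<rho> = 1 - 1 / (2 * real T * c)"
  have Tc: "real T * c \<ge> 1"
  proof -
    have "real T \<ge> 1" using T1 by simp
    then have "1 * 1 \<le> real T * c" using c1 by (intro mult_mono) auto
    then show ?thesis by simp
  qed
  have "0 < real T * c" using Tc by linarith
  then have pos: "0 < c * real T" by (simp only: mult.commute)
  show ?thesis
  proof
    have "1 \<le> 2 * real T * c" using Tc by linarith
    then have "1 / (2 * real T * c) \<le> 1" using pos by (auto simp: divide_le_eq)
    then show "0 \<le> \<rho>" by (simp add: \<rho>_def)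
    show "\<rho> < 1" using pos by (simp add: \<rho>_def)
    show "0 \<le> real T * c" using Tc by simp
    show n1: "norm z \<le> nn z" for z
    proof -
      have "norm (pw M 0 z) \<le> nn z" unfolding nn_def
        by (rule member_le_sum) (use T1 in auto)
      then show ?thesis by simp
    qed
    show n2: "nn z \<le> real T * c * norm z" for z
    proof -
      have "nn z \<le> (\<Sum>s<T. c * norm z)" unfolding nn_def by (intro sum_mono bc)
      then show ?thesis by simp
    qed
    show "nn (M *v z) \<le> \<rho> * nn z" for z
    proof -
      have "nn (M *v z) = (\<Sum>s<T. norm (pw M (Suc s) z))" unfolding nn_def by (simp add: pw_Suc')
      also have "\<dots> = (\<Sum>s<Suc T. norm (pw M s z)) - norm z"
        by (simp only: sum.lessThan_Suc_shift) simp
      also have "\<dots> = nn z + norm (pw M T z) - norm z" by (simp add: nn_def)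
      also have "\<dots> \<le> nn z - norm z / 2" using bT[of z] by simp
      also have "\<dots> \<le> nn z - nn z / (2 * real T * c)"
      proof -
        have "nn z / (2 * real T * c) \<le> (real T * c * norm z) / (2 * real T * c)"
          by (rule divide_right_mono) (use n2[of z] pos in auto)
        also have "\<dots> = norm z / 2" using T1 c1 by (simp add: field_simps)
        finally show ?thesis by linarith
      qed
      also have "\<dots> = \<rho> * nn z" by (simp add: \<rho>_def algebra_simps)
      finally show ?thesis .
    qed
    show "nn (x + y) \<le> nn x + nn y" for x y
      unfolding nn_def by (simp add: pw_add sum.distrib[symmetric] sum_mono norm_triangle_ineq)
  qed
qed

lemma stable_geo:
  fixes M :: "real^'n^'n"
  assumes pt: "\<And>x. (\<lambda>t. pw M t x) \<longlonglongrightarrow> 0"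
  obtains \<kappa> \<rho> where "0 \<le> \<rho>" "\<rho> < 1" "0 \<le> \<kappa>" "\<And>t z. norm (pw M t z) \<le> \<kappa> * \<rho> ^ t * norm z"
proof -
  obtain \<rho> K and nn :: "real^'n \<Rightarrow> real" where c: "0 \<le> \<rho>" "\<rho> < 1" "0 \<le> K"
    "\<And>z. norm z \<le> nn z" "\<And>z. nn z \<le> K * norm z" "\<And>z. nn (M *v z) \<le> \<rho> * nn z"
    "\<And>x y. nn (x + y) \<le> nn x + nn y"
    using contraction_norm[OF pt] by blast
  have "nn (pw M t z) \<le> \<rho> ^ t * nn z" for t z
  proof (induct t)
    case 0 then show ?case by simp
  next
    case (Suc t)
    have "nn (pw M (Suc t) z) \<le> \<rho> * nn (pw M t z)" unfolding pw_Suc by (rule c(6))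
    also have "\<dots> \<le> \<rho> * (\<rho> ^ t * nn z)" using Suc c(1) by (rule mult_left_mono)
    finally show ?case by simp
  qed
  then have bd: "norm (pw M t z) \<le> K * \<rho> ^ t * norm z" for t z
  proof -
    have "norm (pw M t z) \<le> \<rho> ^ t * nn z" using c(4)[of "pw M t z"] \<open>nn (pw M t z) \<le> \<rho> ^ t * nn z\<close> by linarith
    also have "\<dots> \<le> \<rho> ^ t * (K * norm z)" using c(5)[of z] c(1) by (intro mult_left_mono) auto
    finally show ?thesis by (simp add: mult_ac)
  qed
  show ?thesis by (rule that[OF c(1,2,3) bd])
qed

lemma stable_iss:
  fixes M :: "real^'n^'n"
  assumes pt: "\<And>x. (\<lambda>t. pw M t x) \<longlonglongrightarrow> 0"
    and y: "\<And>t. y (Suc t) = M *v y t + w t" and w: "w \<longlonglongrightarrow> 0"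
  shows "y \<longlonglongrightarrow> 0"
proof -
  obtain \<rho> K and nn :: "real^'n \<Rightarrow> real" where c: "0 \<le> \<rho>" "\<rho> < 1" "0 \<le> K"
    "\<And>z. norm z \<le> nn z" "\<And>z. nn z \<le> K * norm z" "\<And>z. nn (M *v z) \<le> \<rho> * nn z"
    "\<And>x y. nn (x + y) \<le> nn x + nn y"
    using contraction_norm[OF pt] by blast
  have "(\<lambda>t. nn (y t)) \<longlonglongrightarrow> 0"
  proof (rule seq_contract[where \<rho> = \<rho> and e = "\<lambda>t. K * norm (w t)"])
    show "0 \<le> nn (y t)" for t using c(4)[of "y t"] norm_ge_zero[of "y t"] by linarith
    show "nn (y (Suc t)) \<le> \<rho> * nn (y t) + K * norm (w t)" for t
      unfolding y using c(7)[of "M *v y t" "w t"] c(6)[of "y t"] c(5)[of "w t"] by linarith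
    show "(\<lambda>t. K * norm (w t)) \<longlonglongrightarrow> 0"
      using w by (intro tendsto_mult_right_zero tendsto_norm_zero)
  qed (use c in auto)
  then show ?thesis
    by (rule Lim_null_comparison[rotated]) (use c(4) in auto)
qed



declare transpose_matrix_vector[simp del]

lemma mv_neg: "(- M) *v x = - (M *v (x::'a::ring_1^'n))"
  by (simp add: vec_eq_iff matrix_vector_mult_def sum_negf)

lemma tr_add: "transpose (A + B) = transpose A + transpose (B::'a::semiring_1^'n^'m)"
  by (simp add: transpose_def vec_eq_iff)
lemma tr_diff: "transpose (A - B) = transpose A - transpose (B::'a::ring_1^'n^'m)"
  by (simp add: transpose_def vec_eq_iff)
lemma tr_zero[simp]: "transpose (0::'a::semiring_1^'n^'m) = 0"
  by (simp add: transpose_def vec_eq_iff)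
lemma mm_add_r: "(A + B) ** (C::'a::semiring_1^'p^'n) = A ** C + B ** (C::'a^'p^'n)"
  by (simp add: matrix_matrix_mult_def vec_eq_iff sum.distrib distrib_right)
lemma mm_diff_r: "(A - B) ** (C::'a::ring_1^'p^'n) = A ** C - B ** C"
  by (simp add: matrix_matrix_mult_def vec_eq_iff sum_subtractf left_diff_distrib)
lemma mm_diff_l: "(C::'a::ring_1^'n^'p) ** (A - B) = C ** A - C ** B"
  by (simp add: matrix_matrix_mult_def vec_eq_iff sum_subtractf right_diff_distrib)

lemma dot_mv: "(x::real^'n) \<bullet> (M *v y) = (transpose M *v x) \<bullet> y"
  by (simp add: dot_lmul_matrix transpose_matrix_vector)

lemma dot_mv': "(M *v x) \<bullet> (y::real^'n) = x \<bullet> (transpose M *v y)"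
  by (metis dot_mv transpose_transpose)

definition qf :: "real^'n^'n \<Rightarrow> real^'n \<Rightarrow> real" where "qf M x = x \<bullet> (M *v x)"

lemma qf_add_mat: "qf (M + N) x = qf M x + qf N x"
  by (simp add: qf_def matrix_vector_mult_add_rdistrib inner_add_right)
lemma qf_diff_mat: "qf (M - N) x = qf M x - qf N x"
  by (simp add: qf_def matrix_vector_mult_diff_rdistrib inner_diff_right)
lemma qf_zero_mat[simp]: "qf 0 x = 0" by (simp add: qf_def)
lemma qf_zero_vec[simp]: "qf M 0 = 0" by (simp add: qf_def)

lemma qf_sum: "qf M x = (\<Sum>i\<in>UNIV. \<Sum>j\<in>UNIV. x $ i * M $ i $ j * x $ j)"
  by (simp add: qf_def inner_vec_def matrix_vector_mult_def sum_distrib_left mult_ac)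

lemma qf_add_vec:
  assumes "transpose M = M"
  shows "qf M (x + y) = qf M x + 2 * (x \<bullet> (M *v y)) + qf M y"
proof -
  have "y \<bullet> (M *v x) = x \<bullet> (M *v y)"
    by (metis assms dot_mv inner_commute)
  then show ?thesis
    by (simp add: qf_def matrix_vector_right_distrib inner_add_left inner_add_right)
qed

lemma axis_mv: "(M::real^'n^'m) *v axis j 1 = (\<chi> i. M $ i $ j)"
  by (simp add: matrix_vector_mult_basis column_def)

lemma qf_axis: "qf M (axis i 1) = M $ i $ i"
  by (simp add: qf_def axis_mv inner_axis')

lemma sym_entry:
  assumes "transpose M = M"
  shows "M $ i $ j = (qf M (axis i 1 + axis j 1) - qf M (axis i 1) - qf M (axis j 1)) / 2"
  using qf_add_vec[OF assms, of "axis i 1" "axis j 1"] by (simp add: qf_axis axis_mv inner_axis')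

lemma sym_qf_eq:
  assumes "transpose X = X" "transpose Y = Y" "\<And>x. qf X x = qf Y x"
  shows "X = Y"
  unfolding vec_eq_iff using sym_entry[OF assms(1)] sym_entry[OF assms(2)] assms(3) by metis

lemma pd_inj: "pd G \<Longrightarrow> G *v x = 0 \<Longrightarrow> x = 0"
  unfolding pd_def by (metis inner_zero_right less_irrefl)

lemma pd_inv:
  assumes "pd (G::real^'n^'n)"
  shows "G ** matrix_inv G = mat 1" "matrix_inv G ** G = mat 1"
proof -
  have "\<exists>B. B ** G = mat 1"
    using pd_inj[OF assms] by (simp add: matrix_left_invertible_ker)
  then have "invertible G" by (simp add: invertible_left_inverse)
  then have "\<exists>A'. G ** A' = mat 1 \<and> A' ** G = mat 1" by (simp add: invertible_def)
  then have "G ** matrix_inv G = mat 1 \<and> matrix_inv G ** G = mat 1"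
    unfolding matrix_inv_def by (rule someI_ex)
  then show "G ** matrix_inv G = mat 1" "matrix_inv G ** G = mat 1" by auto
qed

lemma inv_sym:
  assumes "transpose G = G" "G ** Gi = mat 1" "Gi ** (G::real^'n^'n) = mat 1"
  shows "transpose Gi = Gi"
proof -
  have "transpose Gi ** G = mat 1"
    using assms(1,2) by (metis matrix_transpose_mul transpose_mat)
  then have "transpose Gi = transpose Gi ** (G ** Gi)" using assms(2) by simp
  also have "\<dots> = Gi" by (simp add: matrix_mul_assoc \<open>transpose Gi ** G = mat 1\<close>)
  finally show ?thesis .
qed

definition Ric :: "real^'n^'n \<Rightarrow> real^'m^'n \<Rightarrow> real^'n^'n \<Rightarrow> real^'m^'m \<Rightarrow> real^'n^'n \<Rightarrow> real^'n^'n" where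
  "Ric A B Q R X = transpose A ** X ** A
                - transpose A ** X ** B ** matrix_inv (R + transpose B ** X ** B) ** transpose B ** X ** A
                + Q"

definition gain :: "real^'n^'n \<Rightarrow> real^'m^'n \<Rightarrow> real^'m^'m \<Rightarrow> real^'n^'n \<Rightarrow> real^'n^'m" where
  "gain A B R X = - (matrix_inv (R + transpose B ** X ** B) ** transpose B ** X ** A)"

definition Jc :: "real^'n^'n \<Rightarrow> real^'m^'n \<Rightarrow> real^'n^'n \<Rightarrow> real^'m^'m \<Rightarrow> real^'n^'n \<Rightarrow> real^'n \<Rightarrow> real^'m \<Rightarrow> real" where
  "Jc A B Q R X x u = qf Q x + qf R u + qf X (A *v x + B *v u)"

lemma psd_sym: "psd X \<Longrightarrow> transpose X = X" by (simp add: psd_def)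
lemma psd_qf: "psd X \<Longrightarrow> 0 \<le> qf X x" by (simp add: psd_def qf_def)
lemma pd_sym: "pd X \<Longrightarrow> transpose X = X" by (simp add: pd_def)
lemma pd_qf: "pd X \<Longrightarrow> 0 \<le> qf X x" unfolding pd_def qf_def by (cases "x = 0") (auto intro: less_imp_le)

lemma qf_mult: "qf (transpose B ** X ** B) u = qf X (B *v u)"
  by (simp add: qf_def dot_mv' matrix_vector_mul_assoc[symmetric])

lemma pd_G:
  assumes "psd X" "pd R"
  shows "pd (R + transpose B ** X ** B)"
proof -
  have "transpose (R + transpose B ** X ** B) = R + transpose B ** X ** B"
    using assms by (simp add: tr_add matrix_transpose_mul psd_sym pd_sym matrix_mul_assoc)
  moreover have "0 < u \<bullet> ((R + transpose B ** X ** B) *v u)" if "u \<noteq> 0" for u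
  proof -
    have "0 < u \<bullet> (R *v u)" using assms(2) that by (simp add: pd_def)
    moreover have "0 \<le> qf (transpose B ** X ** B) u" unfolding qf_mult by (rule psd_qf[OF assms(1)])
    ultimately show ?thesis
      by (simp add: qf_def matrix_vector_mult_add_rdistrib inner_add_right)
  qed
  ultimately show ?thesis by (simp add: pd_def)
qed

lemma complete_square:
  assumes X: "psd X" and R: "pd R"
  shows "Jc A B Q R X x u = qf (Ric A B Q R X) x + qf (R + transpose B ** X ** B) (u - gain A B R X *v x)"
proof -
  define G where "G = R + transpose B ** X ** B"
  define Gi where "Gi = matrix_inv G"
  have pdG: "pd G" unfolding G_def by (rule pd_G[OF X R])
  have GGi: "G ** Gi = mat 1" unfolding Gi_def by (rule pd_inv[OF pdG])
  have Gs: "transpose G = G" using pdG by (simp add: pd_def)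
  have Xs: "transpose X = X" using X by (simp add: psd_def)
  define a where "a = A *v x"
  define b where "b = B *v u"
  define h where "h = transpose B *v (X *v a)"
  define g where "g = Gi *v h"
  have gain_x: "gain A B R X *v x = - g"
    by (simp add: gain_def g_def h_def a_def Gi_def G_def matrix_vector_mul_assoc[symmetric] mv_neg)
  have e1: "(Ric A B Q R X) *v x = transpose A *v (X *v a) - transpose A *v (X *v (B *v g)) + Q *v x"
    unfolding Ric_def a_def g_def h_def Gi_def G_def
    by (simp add: matrix_vector_mult_add_rdistrib matrix_vector_mult_diff_rdistrib matrix_vector_mul_assoc[symmetric])
  have e2: "x \<bullet> (transpose A *v w) = a \<bullet> w" for w by (simp add: a_def dot_mv')
  have e3: "a \<bullet> (X *v (B *v v)) = h \<bullet> v" for v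
    by (simp add: dot_mv Xs h_def)
  have ric: "qf (Ric A B Q R X) x = qf X a - h \<bullet> g + qf Q x"
    unfolding qf_def e1 by (simp add: inner_add_right inner_diff_right e2 e3)
  have Gg: "G *v g = h" by (simp add: g_def matrix_vector_mul_assoc GGi)
  have gGu: "g \<bullet> (G *v u) = h \<bullet> u" by (simp add: dot_mv Gs Gg)
  have qG: "qf G (u + g) = qf G u + 2 * (h \<bullet> u) + h \<bullet> g"
    using gGu by (simp add: qf_def matrix_vector_right_distrib inner_add_left inner_add_right Gg inner_commute)
  have qGu: "qf G u = qf R u + qf X b"
    by (simp add: G_def qf_add_mat qf_mult b_def)
  have qXab: "qf X (a + b) = qf X a + 2 * (h \<bullet> u) + qf X b"
    using qf_add_vec[OF Xs, of a b] e3[of u] by (simp add: b_def)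
  have "Jc A B Q R X x u = qf Q x + qf R u + qf X a + 2 * (h \<bullet> u) + qf X b"
    unfolding Jc_def using qXab by (simp add: a_def b_def)
  also have "\<dots> = qf (Ric A B Q R X) x + qf G (u + g)"
    unfolding ric qG qGu by simp
  finally show ?thesis by (simp add: gain_x G_def)
qed



definition mnorm :: "real^'n^'m \<Rightarrow> real" where "mnorm M = (\<Sum>i\<in>UNIV. \<Sum>j\<in>UNIV. \<bar>M $ i $ j\<bar>)"

lemma mnorm_nonneg: "0 \<le> mnorm M" unfolding mnorm_def by (intro sum_nonneg) auto

lemma mv_bound: "norm (M *v x) \<le> mnorm M * norm x"
proof -
  have "norm (M *v x) \<le> onorm ((*v) M) * norm x"
    by (rule onorm[OF matrix_vector_mul_bounded_linear])
  also have "\<dots> \<le> mnorm M * norm x"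
    unfolding mnorm_def by (intro mult_right_mono onorm_le_matrix_component_sum) auto
  finally show ?thesis .
qed

lemma qf_bound: "\<bar>qf M y\<bar> \<le> mnorm M * (norm y)^2"
proof -
  have "\<bar>qf M y\<bar> \<le> norm y * norm (M *v y)" unfolding qf_def by (rule Cauchy_Schwarz_ineq2)
  also have "\<dots> \<le> norm y * (mnorm M * norm y)" by (intro mult_left_mono mv_bound) auto
  finally show ?thesis by (simp add: power2_eq_square mult_ac)
qed

definition mle :: "real^'n^'n \<Rightarrow> real^'n^'n \<Rightarrow> bool" where "mle X Y \<longleftrightarrow> (\<forall>x. qf X x \<le> qf Y x)"

lemma psd_0: "psd (0::real^'n^'n)" by (simp add: psd_def)

locale lq =
  fixes A :: "real^'n^'n" and B :: "real^'m^'n" and Q :: "real^'n^'n" and R :: "real^'m^'m"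
  assumes Qp: "psd Q" and Rp: "pd R"
begin

abbreviation "F \<equiv> Ric A B Q R"
abbreviation "J \<equiv> Jc A B Q R"
abbreviation "K \<equiv> gain A B R"

lemma J_nonneg: "psd X \<Longrightarrow> 0 \<le> J X x u"
  unfolding Jc_def using psd_qf[OF Qp] pd_qf[OF Rp] psd_qf[of X] by (simp add: add_nonneg_nonneg)

lemma F_le_J:
  assumes "psd X" shows "qf (F X) x \<le> J X x u"
proof -
  have "J X x u = qf (F X) x + qf (R + transpose B ** X ** B) (u - K X *v x)"
    by (rule complete_square[OF assms Rp])
  moreover have "0 \<le> qf (R + transpose B ** X ** B) (u - K X *v x)"
    by (rule pd_qf[OF pd_G[OF assms Rp]])
  ultimately show ?thesis by linarith
qed

lemma F_eq_J:
  assumes "psd X" shows "qf (F X) x = J X x (K X *v x)"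
  using complete_square[OF assms Rp, where x=x and u="K X *v x" and A=A and Q=Q] by simp

lemma J_mono: "mle X Y \<Longrightarrow> J X x u \<le> J Y x u"
  unfolding Jc_def mle_def by (simp add: add_left_mono)

lemma Gi_sym:
  assumes "psd X"
  shows "transpose (matrix_inv (R + transpose B ** X ** B)) = matrix_inv (R + transpose B ** X ** B)"
proof -
  have p: "pd (R + transpose B ** X ** B)" by (rule pd_G[OF assms Rp])
  show ?thesis by (rule inv_sym[OF pd_sym[OF p] pd_inv(1)[OF p] pd_inv(2)[OF p]])
qed

lemma F_sym: "psd X \<Longrightarrow> transpose (F X) = F X"
  unfolding Ric_def using Gi_sym[of X] psd_sym[of X] psd_sym[OF Qp]
  by (simp add: tr_add tr_diff matrix_transpose_mul matrix_mul_assoc)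

lemma F_psd:
  assumes "psd X" shows "psd (F X)"
proof -
  have "0 \<le> qf (F X) x" for x
    unfolding F_eq_J[OF assms] by (rule J_nonneg[OF assms])
  then show ?thesis using F_sym[OF assms] by (simp add: psd_def qf_def)
qed

lemma F_mono:
  assumes "psd X" "psd Y" "mle X Y" shows "mle (F X) (F Y)"
  unfolding mle_def
proof
  fix x
  have "qf (F X) x \<le> J X x (K Y *v x)" by (rule F_le_J[OF assms(1)])
  also have "\<dots> \<le> J Y x (K Y *v x)" by (rule J_mono[OF assms(3)])
  also have "\<dots> = qf (F Y) x" by (rule F_eq_J[OF assms(2), symmetric])
  finally show "qf (F X) x \<le> qf (F Y) x" .
qed

definition Xk :: "nat \<Rightarrow> real^'n^'n" where "Xk k = (F ^^ k) 0"

lemma Xk_0: "Xk 0 = 0" by (simp add: Xk_def)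
lemma Xk_Suc: "Xk (Suc k) = F (Xk k)" by (simp add: Xk_def)

lemma Xk_psd: "psd (Xk k)"
  by (induct k) (simp_all add: Xk_0 Xk_Suc psd_0 F_psd)

lemma Xk_mono: "mle (Xk k) (Xk (Suc k))"
proof (induct k)
  case 0 show ?case using Xk_psd[of 1] by (simp add: mle_def Xk_0 psd_qf)
next
  case (Suc k) then show ?case using F_mono[OF Xk_psd[of k] Xk_psd[of "Suc k"]] by (simp add: Xk_Suc)
qed

lemma Xk_inc: "incseq (\<lambda>k. qf (Xk k) x)"
  by (rule incseq_SucI) (use Xk_mono in \<open>auto simp: mle_def\<close>)

lemma Xk_below: "psd Y \<Longrightarrow> F Y = Y \<Longrightarrow> mle (Xk k) Y"
proof (induct k)
  case 0 then show ?case by (simp add: mle_def Xk_0 psd_qf)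
next
  case (Suc k) then show ?case using F_mono[OF Xk_psd Suc.prems(1)] by (simp add: Xk_Suc)
qed

lemma Xk_bound:
  assumes st: "schur_stable (A + B ** K0)"
  shows "\<exists>\<beta>. \<forall>k x. qf (Xk k) x \<le> \<beta> * (norm x)^2"
proof -
  define Mc where "Mc = A + B ** K0"
  define l where "l y = qf Q y + qf R (K0 *v y)" for y
  have Mcx: "A *v x + B *v (K0 *v x) = Mc *v x" for x
    by (simp add: Mc_def matrix_vector_mult_add_rdistrib matrix_vector_mul_assoc)
  have main: "qf (Xk k) x \<le> (\<Sum>t<k. l (pw Mc t x))" for k x
  proof (induct k arbitrary: x)
    case 0 then show ?case by (simp add: Xk_0)
  next
    case (Suc k)
    have "qf (Xk (Suc k)) x \<le> J (Xk k) x (K0 *v x)"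
      unfolding Xk_Suc by (rule F_le_J[OF Xk_psd])
    also have "\<dots> = l x + qf (Xk k) (Mc *v x)" by (simp add: Jc_def l_def Mcx)
    also have "\<dots> \<le> l x + (\<Sum>t<k. l (pw Mc t (Mc *v x)))" using Suc by simp
    also have "\<dots> = (\<Sum>t<Suc k. l (pw Mc t x))"
      by (simp only: sum.lessThan_Suc_shift pw_Suc' pw_0)
    finally show ?case .
  qed
  define cl where "cl = mnorm Q + mnorm R * (mnorm K0)^2"
  have cl0: "0 \<le> cl" unfolding cl_def using mnorm_nonneg[of Q] mnorm_nonneg[of R] by simp
  have lb: "l y \<le> cl * (norm y)^2" for y
  proof -
    have "qf Q y \<le> mnorm Q * (norm y)^2" using qf_bound[of Q y] by linarith
    moreover have "qf R (K0 *v y) \<le> mnorm R * (norm (K0 *v y))^2" using qf_bound[of R "K0 *v y"] by linarith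
    moreover have "(norm (K0 *v y))^2 \<le> (mnorm K0 * norm y)^2"
      by (intro power_mono mv_bound) auto
    then have "mnorm R * (norm (K0 *v y))^2 \<le> mnorm R * ((mnorm K0)^2 * (norm y)^2)"
      by (intro mult_left_mono mnorm_nonneg) (simp add: power_mult_distrib)
    ultimately show ?thesis unfolding l_def cl_def by (simp add: algebra_simps)
  qed
  have pt: "\<And>x. (\<lambda>t. pw Mc t x) \<longlonglongrightarrow> 0" unfolding Mc_def by (rule schur_pw[OF st])
  have "\<exists>\<kappa> \<rho>. 0 \<le> \<rho> \<and> \<rho> < 1 \<and> 0 \<le> \<kappa> \<and> (\<forall>t z. norm (pw Mc t z) \<le> \<kappa> * \<rho> ^ t * norm z)"
    by (rule stable_geo[OF pt]) blast
  then obtain \<kappa> \<rho> where g: "0 \<le> \<rho>" "\<rho> < 1" "0 \<le> \<kappa>" "\<And>t z. norm (pw Mc t z) \<le> \<kappa> * \<rho> ^ t * norm z"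
    by blast
  have r2: "norm (\<rho>^2) < 1" using g(1,2) by (simp add: abs_square_less_1)
  define \<beta> where "\<beta> = cl * \<kappa>^2 * (1 / (1 - \<rho>^2))"
  have "qf (Xk k) x \<le> \<beta> * (norm x)^2" for k x
  proof -
    have "(\<Sum>t<k. l (pw Mc t x)) \<le> (\<Sum>t<k. cl * \<kappa>^2 * (norm x)^2 * (\<rho>^2)^t)"
    proof (rule sum_mono)
      fix t
      have "(norm (pw Mc t x))^2 \<le> (\<kappa> * \<rho> ^ t * norm x)^2"
        by (intro power_mono g(4)) auto
      also have "\<dots> = \<kappa>^2 * (norm x)^2 * (\<rho>^2)^t"
      proof -
        have "(\<rho> ^ t)^2 = (\<rho>^2)^t" by (metis power_mult mult.commute)
        then show ?thesis by (simp add: power_mult_distrib)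
      qed
      finally have "cl * (norm (pw Mc t x))^2 \<le> cl * (\<kappa>^2 * (norm x)^2 * (\<rho>^2)^t)"
        by (intro mult_left_mono cl0)
      then show "l (pw Mc t x) \<le> cl * \<kappa>^2 * (norm x)^2 * (\<rho>^2)^t"
        using lb[of "pw Mc t x"] by (simp add: mult_ac)
    qed
    also have "\<dots> = cl * \<kappa>^2 * (norm x)^2 * (\<Sum>t<k. (\<rho>^2)^t)" by (simp add: sum_distrib_left)
    also have "\<dots> \<le> cl * \<kappa>^2 * (norm x)^2 * (1 / (1 - \<rho>^2))"
    proof (intro mult_left_mono)
      have "(\<Sum>t<k. (\<rho>^2)^t) \<le> (\<Sum>t. (\<rho>^2)^t)"
        by (rule sum_le_suminf[OF summable_geometric[OF r2]]) auto
      then show "(\<Sum>t<k. (\<rho>^2)^t) \<le> 1 / (1 - \<rho>^2)" using suminf_geometric[OF r2] by simp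
    qed (use cl0 in auto)
    finally show ?thesis using main[of k x] by (simp add: \<beta>_def mult_ac)
  qed
  then show ?thesis by blast
qed

end



lemma tendsto_qf:
  assumes "(f \<longlongrightarrow> (M::real^'n^'n)) F" "(g \<longlongrightarrow> x) F"
  shows "((\<lambda>k. qf (f k) (g k)) \<longlongrightarrow> qf M x) F"
  unfolding qf_sum by (intro tendsto_intros assms)

lemma tendsto_mm:
  assumes "(f \<longlongrightarrow> (a::real^'n^'m)) F" "(g \<longlongrightarrow> (b::real^'p^'n)) F"
  shows "((\<lambda>k. f k ** g k) \<longlongrightarrow> a ** b) F"
  unfolding matrix_matrix_mult_def
  by (intro vec_tendstoI) (simp add: tendsto_intros assms)

lemma tendsto_tr:
  assumes "(f \<longlongrightarrow> (a::real^'n^'m)) F"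
  shows "((\<lambda>k. transpose (f k)) \<longlongrightarrow> transpose a) F"
  unfolding transpose_def
  by (intro vec_tendstoI) (simp add: tendsto_intros assms)

lemma tendsto_mnorm:
  assumes "(f \<longlongrightarrow> (a::real^'n^'m)) F"
  shows "((\<lambda>k. mnorm (f k)) \<longlongrightarrow> mnorm a) F"
  unfolding mnorm_def by (intro tendsto_intros assms)

lemma mv_scaleR: "(M::real^'n^'m) *v (c *\<^sub>R x) = c *\<^sub>R (M *v x)"
  using mv_smult[of M c x] by (simp add: scalar_mult_eq_scaleR)

lemma qf_scale: "qf M (c *\<^sub>R x) = c^2 * qf M x"
  by (simp add: qf_def mv_scaleR power2_eq_square)

lemma pd_coercive:
  assumes "pd (R::real^'m^'m)"
  obtains r where "0 < r" "\<And>u. r * (norm u)^2 \<le> qf R u"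
proof -
  have cont: "continuous_on (sphere 0 1) (\<lambda>u. qf R u)"
    unfolding qf_sum by (intro continuous_intros)
  have ne: "sphere (0::real^'m) 1 \<noteq> {}"
  proof -
    obtain i :: 'm where True by simp
    have "axis i (1::real) \<in> sphere 0 1" by simp
    then show ?thesis by blast
  qed
  obtain u0 where u0: "u0 \<in> sphere 0 1" "\<And>y. y \<in> sphere 0 1 \<Longrightarrow> qf R u0 \<le> qf R y"
    using continuous_attains_inf[OF compact_sphere ne cont] by auto
  have "u0 \<noteq> 0" using u0(1) by auto
  then have r0: "0 < qf R u0" using assms by (simp add: pd_def qf_def)
  have "qf R u0 * (norm u)^2 \<le> qf R u" for u
  proof (cases "u = 0")
    case True then show ?thesis by simp
  next
    case False
    define v where "v = (1 / norm u) *\<^sub>R u"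
    have "v \<in> sphere 0 1" using False by (simp add: v_def)
    then have "qf R u0 \<le> qf R v" by (rule u0(2))
    also have "qf R v = qf R u / (norm u)^2" by (simp add: v_def qf_scale power_divide)
    finally show ?thesis using False by (simp add: le_divide_eq)
  qed
  then show ?thesis using that r0 by blast
qed

context lq
begin

lemma J_ge_R: "psd X \<Longrightarrow> qf R u \<le> J X x u"
  unfolding Jc_def using psd_qf[OF Qp, of x] psd_qf[of X "A *v x + B *v u"] by simp

lemma limit_exists:
  assumes bnd: "\<And>k x. qf (Xk k) x \<le> \<beta> * (norm x)^2"
  obtains Xs where "Xk \<longlonglongrightarrow> Xs"
proof -
  define ql where "ql x = (SUP k. qf (Xk k) x)" for x
  have ql: "(\<lambda>k. qf (Xk k) x) \<longlonglongrightarrow> ql x" for x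
    unfolding ql_def
  proof (rule LIMSEQ_incseq_SUP[OF _ Xk_inc])
    show "bdd_above (range (\<lambda>k. qf (Xk k) x))" using bnd by (intro bdd_aboveI2) auto
  qed
  define L where "L = (\<chi> i j. (ql (axis i 1 + axis j 1) - ql (axis i 1) - ql (axis j 1)) / 2 :: real^'n^'n)"
  have "Xk \<longlonglongrightarrow> L"
  proof (intro vec_tendstoI)
    fix i j
    have "(\<lambda>k. Xk k $ i $ j) = (\<lambda>k. (qf (Xk k) (axis i 1 + axis j 1) - qf (Xk k) (axis i 1) - qf (Xk k) (axis j 1)) / 2)"
      using sym_entry[OF psd_sym[OF Xk_psd]] by auto
    moreover have "\<dots> \<longlonglongrightarrow> L $ i $ j" unfolding L_def by (simp add: tendsto_intros ql)
    ultimately show "(\<lambda>k. Xk k $ i $ j) \<longlonglongrightarrow> L $ i $ j" by simp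
  qed
  then show ?thesis by (rule that)
qed

lemma limit_props:
  assumes lim: "Xk \<longlonglongrightarrow> Xs"
  shows "psd Xs" "F Xs = Xs" "\<And>k. mle (Xk k) Xs"
proof -
  have qlim: "(\<lambda>k. qf (Xk k) x) \<longlonglongrightarrow> qf Xs x" for x
    by (rule tendsto_qf[OF lim tendsto_const])
  have sym: "transpose Xs = Xs"
  proof -
    have "(\<lambda>k. transpose (Xk k)) \<longlonglongrightarrow> transpose Xs" by (rule tendsto_tr[OF lim])
    moreover have "(\<lambda>k. transpose (Xk k)) = Xk" using psd_sym[OF Xk_psd] by auto
    ultimately show ?thesis using lim LIMSEQ_unique by metis
  qed
  have nonneg: "0 \<le> qf Xs x" for x
    by (rule LIMSEQ_le_const[OF qlim]) (use psd_qf[OF Xk_psd] in auto)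
  show psdX: "psd Xs" using sym nonneg by (simp add: psd_def qf_def)
  show mle: "mle (Xk k) Xs" for k
    unfolding mle_def using incseq_le[OF Xk_inc qlim] by auto
  have up: "qf Xs x \<le> qf (F Xs) x" for x
  proof (rule LIMSEQ_le_const2[OF LIMSEQ_Suc[OF qlim]], intro exI allI impI)
    fix k
    have "mle (F (Xk k)) (F Xs)" by (rule F_mono[OF Xk_psd psdX mle])
    then show "qf (Xk (Suc k)) x \<le> qf (F Xs) x" by (simp add: Xk_Suc mle_def)
  qed
  obtain r where r: "0 < r" "\<And>u. r * (norm u)^2 \<le> qf R u" using pd_coercive[OF Rp] by blast
  have down: "qf (F Xs) x \<le> qf Xs x" for x
  proof -
    define u where "u k = K (Xk k) *v x" for k
    define y where "y k = A *v x + B *v u k" for k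
    have Jk: "J (Xk k) x (u k) = qf (Xk (Suc k)) x" for k
      unfolding u_def Xk_Suc by (rule F_eq_J[OF Xk_psd, symmetric])
    have Jb: "J (Xk k) x (u k) \<le> qf Xs x" for k
      unfolding Jk using mle by (simp add: mle_def)
    have ub: "(norm (u k))^2 \<le> qf Xs x / r" for k
      using r(2)[of "u k"] J_ge_R[OF Xk_psd, of "u k" k x] Jb[of k] r(1)
      by (simp add: le_divide_eq mult.commute)
    define Yb where "Yb = 2 * (norm (A *v x))^2 + 2 * (mnorm B)^2 * (qf Xs x / r)"
    have yb: "(norm (y k))^2 \<le> Yb" for k
    proof -
      have "norm (y k) \<le> norm (A *v x) + norm (B *v u k)" unfolding y_def by (rule norm_triangle_ineq)
      also have "\<dots> \<le> norm (A *v x) + mnorm B * norm (u k)" using mv_bound by simp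
      finally have "(norm (y k))^2 \<le> (norm (A *v x) + mnorm B * norm (u k))^2"
        by (intro power_mono) auto
      also have "\<dots> \<le> 2 * (norm (A *v x))^2 + 2 * (mnorm B * norm (u k))^2"
        by (smt (verit) sum_squares_bound zero_le_power2 power2_sum)
      also have "\<dots> = 2 * (norm (A *v x))^2 + 2 * (mnorm B)^2 * (norm (u k))^2"
        by (simp add: power_mult_distrib)
      also have "\<dots> \<le> Yb" unfolding Yb_def using ub[of k] by (intro add_left_mono mult_left_mono) auto
      finally show ?thesis .
    qed
    have step: "qf (F Xs) x \<le> qf Xs x + mnorm (Xs - Xk k) * Yb" for k
    proof -
      have "qf (F Xs) x \<le> J Xs x (u k)" by (rule F_le_J[OF psdX])
      also have "\<dots> = J (Xk k) x (u k) + qf (Xs - Xk k) (y k)"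
        by (simp add: Jc_def qf_diff_mat y_def)
      also have "\<dots> \<le> qf Xs x + mnorm (Xs - Xk k) * Yb"
      proof -
        have "qf (Xs - Xk k) (y k) \<le> mnorm (Xs - Xk k) * (norm (y k))^2" using qf_bound by (metis abs_le_D1)
        also have "\<dots> \<le> mnorm (Xs - Xk k) * Yb" by (intro mult_left_mono yb mnorm_nonneg)
        finally show ?thesis using Jb[of k] by linarith
      qed
      finally show ?thesis .
    qed
    have "(\<lambda>k. qf Xs x + mnorm (Xs - Xk k) * Yb) \<longlonglongrightarrow> qf Xs x + mnorm (Xs - Xs) * Yb"
      by (intro tendsto_intros tendsto_mnorm lim)
    then have "(\<lambda>k. qf Xs x + mnorm (Xs - Xk k) * Yb) \<longlonglongrightarrow> qf Xs x" by (simp add: mnorm_def)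
    then show ?thesis by (rule LIMSEQ_le_const) (use step in auto)
  qed
  show "F Xs = Xs"
    by (rule sym_qf_eq[OF F_sym[OF psdX] sym]) (use up down in \<open>auto intro: order_antisym\<close>)
qed

end



context lq
begin

lemma unique_sol:
  assumes lim: "Xk \<longlonglongrightarrow> Xs" and det: "schur_stable (A + L ** C)" and QC: "Q = transpose C ** C"
    and Yp: "psd Y" and YF: "F Y = Y"
  shows "Y = Xs"
proof -
  note XP = limit_props[OF lim]
  have psdX: "psd Xs" and FX: "F Xs = Xs" using XP by auto
  have XY: "qf Xs x \<le> qf Y x" for x
  proof (rule LIMSEQ_le_const2[OF tendsto_qf[OF lim tendsto_const]], intro exI allI impI)
    fix k show "qf (Xk k) x \<le> qf Y x" using Xk_below[OF Yp YF, of k] by (simp add: mle_def)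
  qed
  define Ks where "Ks = K Xs"
  define Ac where "Ac = A + B ** Ks"
  define l where "l y = qf Q y + qf R (Ks *v y)" for y
  have Acx: "A *v x + B *v (Ks *v x) = Ac *v x" for x
    by (simp add: Ac_def matrix_vector_mult_add_rdistrib matrix_vector_mul_assoc)
  have iX: "qf Xs x = l x + qf Xs (Ac *v x)" for x
  proof -
    have "qf Xs x = qf (F Xs) x" using FX by simp
    also have "\<dots> = J Xs x (Ks *v x)" unfolding Ks_def by (rule F_eq_J[OF psdX])
    finally show ?thesis by (simp add: Jc_def l_def Acx)
  qed
  have iY: "qf Y x \<le> l x + qf Y (Ac *v x)" for x
  proof -
    have "qf Y x = qf (F Y) x" using YF by simp
    also have "\<dots> \<le> J Y x (Ks *v x)" by (rule F_le_J[OF Yp])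
    finally show ?thesis by (simp add: Jc_def l_def Acx)
  qed
  define d where "d x = qf Y x - qf Xs x" for x
  have dstep: "d x \<le> d (Ac *v x)" for x using iX[of x] iY[of x] by (simp add: d_def)
  have dit: "d x \<le> d (pw Ac t x)" for t x
  proof (induct t arbitrary: x)
    case 0 then show ?case by simp
  next
    case (Suc t)
    have "d x \<le> d (Ac *v x)" by (rule dstep)
    also have "\<dots> \<le> d (pw Ac t (Ac *v x))" by (rule Suc)
    finally show ?case by (simp add: pw_Suc')
  qed
  obtain r where r: "0 < r" "\<And>u. r * (norm u)^2 \<le> qf R u" using pd_coercive[OF Rp] by blast
  have qC: "qf Q y = (norm (C *v y))^2" for y
    by (simp add: QC qf_def matrix_vector_mul_assoc[symmetric] dot_mv'[symmetric] power2_norm_eq_inner)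
  have lC: "(norm (C *v y))^2 \<le> l y" for y
    using qC[of y] psd_qf[OF Qp] pd_qf[OF Rp, of "Ks *v y"] by (simp add: l_def)
  have lK: "r * (norm (Ks *v y))^2 \<le> l y" for y
    using r(2)[of "Ks *v y"] psd_qf[OF Qp, of y] by (simp add: l_def)
  have l0: "0 \<le> l y" for y using psd_qf[OF Qp, of y] pd_qf[OF Rp, of "Ks *v y"] by (simp add: l_def)
  have conv: "(\<lambda>t. pw Ac t x) \<longlonglongrightarrow> 0" for x
  proof -
    define y where "y t = pw Ac t x" for t
    have tel: "(\<Sum>t<T. l (y t)) + qf Xs (y T) = qf Xs x" for T
    proof (induct T)
      case 0 then show ?case by (simp add: y_def)
    next
      case (Suc T)
      have "qf Xs (y T) = l (y T) + qf Xs (y (Suc T))" using iX[of "y T"] by (simp add: y_def pw_Suc)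
      then show ?case using Suc by simp
    qed
    have "summable (\<lambda>t. l (y t))"
    proof (rule summableI_nonneg_bounded[where x = "qf Xs x"])
      show "0 \<le> l (y t)" for t by (rule l0)
      show "(\<Sum>t<T. l (y t)) \<le> qf Xs x" for T using tel[of T] psd_qf[OF psdX, of "y T"] by linarith
    qed
    then have lz: "(\<lambda>t. l (y t)) \<longlonglongrightarrow> 0" by (rule summable_LIMSEQ_zero)
    have Cz: "(\<lambda>t. C *v y t) \<longlonglongrightarrow> 0"
    proof -
      have s: "(\<lambda>t. sqrt (l (y t))) \<longlonglongrightarrow> 0" using tendsto_real_sqrt[OF lz] by simp
      have "(\<lambda>t. norm (C *v y t)) \<longlonglongrightarrow> 0"
      proof (rule Lim_null_comparison[OF always_eventually s], intro allI)
        fix t show "norm (norm (C *v y t)) \<le> sqrt (l (y t))"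
          using lC[of "y t"] by (simp add: real_le_rsqrt)
      qed
      then show ?thesis by (simp add: tendsto_norm_zero_iff)
    qed
    have Kz: "(\<lambda>t. Ks *v y t) \<longlonglongrightarrow> 0"
    proof -
      have s: "(\<lambda>t. sqrt (l (y t) / r)) \<longlonglongrightarrow> 0"
        using tendsto_real_sqrt[OF tendsto_divide[OF lz tendsto_const[of r]]] r(1) by simp
      have "(\<lambda>t. norm (Ks *v y t)) \<longlonglongrightarrow> 0"
      proof (rule Lim_null_comparison[OF always_eventually s], intro allI)
        fix t
        have "(norm (Ks *v y t))^2 \<le> l (y t) / r" using lK[of "y t"] r(1) by (simp add: le_divide_eq mult.commute)
        then show "norm (norm (Ks *v y t)) \<le> sqrt (l (y t) / r)" by (simp add: real_le_rsqrt)
      qed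
      then show ?thesis by (simp add: tendsto_norm_zero_iff)
    qed
    define w where "w t = B *v (Ks *v y t) - L *v (C *v y t)" for t
    have wz: "w \<longlonglongrightarrow> 0"
    proof -
      have "(\<lambda>t. B *v (Ks *v y t) - L *v (C *v y t)) \<longlonglongrightarrow> B *v 0 - L *v 0"
        by (intro tendsto_diff bounded_linear.tendsto[OF matrix_vector_mul_bounded_linear] Kz Cz)
      then show ?thesis unfolding w_def[abs_def] by simp
    qed
    have ystep: "y (Suc t) = (A + L ** C) *v y t + w t" for t
      by (simp add: y_def pw_Suc w_def Ac_def matrix_vector_mult_add_rdistrib matrix_vector_mul_assoc[symmetric])
    have "y \<longlonglongrightarrow> 0" by (rule stable_iss[OF schur_pw[OF det] ystep wz])
    then show ?thesis unfolding y_def[abs_def] .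
  qed
  have "d x \<le> 0" for x
  proof -
    have "(\<lambda>t. d (pw Ac t x)) \<longlonglongrightarrow> qf Y 0 - qf Xs 0"
      unfolding d_def by (intro tendsto_diff tendsto_qf tendsto_const conv)
    then have "(\<lambda>t. d (pw Ac t x)) \<longlonglongrightarrow> 0" by simp
    then show ?thesis by (rule LIMSEQ_le_const) (use dit in auto)
  qed
  then have "qf Y x = qf Xs x" for x using XY[of x] unfolding d_def
    by (metis diff_le_0_iff_le order_antisym)
  then show ?thesis by (rule sym_qf_eq[OF psd_sym[OF Yp] psd_sym[OF psdX]])
qed

end



lemma sum_UNIV_plus: "(\<Sum>l\<in>(UNIV::('a::finite + 'b::finite) set). g l) = (\<Sum>a\<in>UNIV. g (Inl a)) + (\<Sum>b\<in>UNIV. g (Inr b))"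
proof -
  have "sum g (UNIV <+> UNIV) = (\<Sum>a\<in>UNIV. g (Inl a)) + (\<Sum>b\<in>UNIV. g (Inr b))"
    by (rule trans[OF sum.Plus]) (simp_all add: comp_def)
  then show ?thesis by simp
qed

definition Mab :: "real^'n::finite^'n \<Rightarrow> real^'m::finite^'n \<Rightarrow> real^'n^('n + 'm)" where
  "Mab A B = (\<chi> i j. case i of Inl a \<Rightarrow> A $ j $ a | Inr b \<Rightarrow> B $ j $ b)"

lemma Mab_stack: "transpose (Mab A B) *v stackv x u = A *v x + B *v u"
  by (simp add: vec_eq_iff matrix_vector_mult_def transpose_def Mab_def stackv_def sum_UNIV_plus)

lemma outer_mv: "outer v (transpose M *v v) = outer v v ** (M::real^'b^'a)"
  by (simp add: vec_eq_iff outer_def matrix_vector_mult_def matrix_matrix_mult_def transpose_def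
      sum_distrib_left mult_ac)

lemma sum_mm: "(\<Sum>k\<in>I. f k) ** (C::real^'p^'n) = (\<Sum>k\<in>I. f k ** C)"
  by (induct I rule: infinite_finite_induct) (simp_all add: mm_add_r)

definition Phi :: "real^'n::finite^'n \<Rightarrow> real^'m::finite^'n \<Rightarrow> real^'n^'n \<Rightarrow> real^'m^'m \<Rightarrow> real^'n^'n \<Rightarrow> real^('n + 'm)^('n + 'm)" where
  "Phi A B Q R X = blockmat (Q + transpose A ** X ** A) (transpose A ** X ** B)
                                   (transpose B ** X ** A) (R + transpose B ** X ** B)"

lemma Phi_eq: "blockmat Q 0 0 R + Mab A B ** X ** transpose (Mab A B) = Phi A B Q R X"
  by (simp add: vec_eq_iff Phi_def blockmat_def Mab_def matrix_matrix_mult_def transpose_def split: sum.split)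

lemma blk_blockmat: "blk11 (blockmat a b c d) = a" "blk12 (blockmat a b c d) = b" "blk22 (blockmat a b c d) = d"
  by (simp_all add: vec_eq_iff blk11_def blk12_def blk22_def blockmat_def)

lemma schur_Phi:
  assumes "transpose X = X"
  shows "blk11 (Phi A B Q R X) - blk12 (Phi A B Q R X) ** matrix_inv (blk22 (Phi A B Q R X)) ** transpose (blk12 (Phi A B Q R X))
     = Ric A B Q R X"
  unfolding Phi_def blk_blockmat Ric_def using assms
  by (simp add: matrix_transpose_mul matrix_mul_assoc algebra_simps)

lemma cancel_S:
  assumes "Si ** S = mat 1" "S ** Si = mat 1" "S ** P ** S = S ** W ** (S::real^'k^'k)"
  shows "P = W"
proof -
  have "P = (Si ** S) ** P ** (S ** Si)" using assms(1,2) by simp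
  also have "\<dots> = Si ** (S ** P ** S) ** Si" by (simp add: matrix_mul_assoc)
  also have "\<dots> = Si ** (S ** W ** S) ** Si" using assms(3) by simp
  also have "\<dots> = (Si ** S) ** W ** (S ** Si)" by (simp add: matrix_mul_assoc)
  also have "\<dots> = W" using assms(1,2) by simp
  finally show ?thesis .
qed

lemma tendsto_blockmat:
  assumes "(f1 \<longlongrightarrow> a1) F" "(f2 \<longlongrightarrow> a2) F" "(f3 \<longlongrightarrow> a3) F" "(f4 \<longlongrightarrow> a4) F"
  shows "((\<lambda>k. blockmat (f1 k) (f2 k) (f3 k) (f4 k)) \<longlongrightarrow> blockmat a1 a2 a3 a4) F"
proof (intro vec_tendstoI)
  fix i j
  show "((\<lambda>k. blockmat (f1 k) (f2 k) (f3 k) (f4 k) $ i $ j) \<longlongrightarrow> blockmat a1 a2 a3 a4 $ i $ j) F"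
    by (cases i; cases j) (simp_all add: blockmat_def tendsto_vec_nth assms)
qed

lemma tendsto_Phi:
  assumes "(f \<longlongrightarrow> X) F"
  shows "((\<lambda>k. Phi A B Q R (f k)) \<longlongrightarrow> Phi A B Q R X) F"
  unfolding Phi_def
  by (intro tendsto_blockmat tendsto_add tendsto_const tendsto_mm assms)



theorem proposition7:
  fixes A :: "real^'n::finite^'n" and B :: "real^'m::finite^'n"
    and C :: "real^'n^'p::finite" and Q :: "real^'n^'n" and R :: "real^'m^'m"
    and x :: "nat \<Rightarrow> real^'n" and u :: "nat \<Rightarrow> real^'m" and z :: "real^'n"
    and N :: nat
    and S :: "real^('n + 'm)^('n + 'm)" and H :: "real^'n^('n + 'm)"
    and P :: "nat \<Rightarrow> real^('n + 'm)^('n + 'm)"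
  assumes stab: "stabilizable A B"
    and QC: "Q = transpose C ** C"
    and det: "detectable A C"
    and Rpd: "pd R"
    and x0: "x 0 = z"
    and dyn: "\<And>k. x (Suc k) = A *v x k + B *v u k"
    and N: "N \<ge> 1"
    and S_def: "S = (1 / real N) *\<^sub>R (\<Sum>k<N. outer (stackv (x k) (u k)) (stackv (x k) (u k)))"
    and H_def: "H = (1 / real N) *\<^sub>R (\<Sum>k<N. outer (stackv (x k) (u k)) (x (Suc k)))"
    and Spd: "pd S"
    and P0: "P 0 = 0"
    and Psym: "\<And>k. transpose (P (Suc k)) = P (Suc k)"
    and Pstep: "\<And>k. S ** P (Suc k) ** S =
        S ** blockmat Q 0 0 R ** S
        + H ** (if k = 0 then 0
                else blk11 (P k) - blk12 (P k) ** matrix_inv (blk22 (P k)) ** transpose (blk12 (P k)))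
           ** transpose H"
  shows "(\<exists>!X. psd X \<and>
            X = transpose A ** X ** A
                - transpose A ** X ** B ** matrix_inv (R + transpose B ** X ** B) ** transpose B ** X ** A
                + Q)
       \<and> (\<forall>X. psd X \<and>
            X = transpose A ** X ** A
                - transpose A ** X ** B ** matrix_inv (R + transpose B ** X ** B) ** transpose B ** X ** A
                + Q
          \<longrightarrow> P \<longlonglongrightarrow> blockmat (Q + transpose A ** X ** A) (transpose A ** X ** B)
                                   (transpose B ** X ** A) (R + transpose B ** X ** B))"
proof -
  have Qsym: "transpose Q = Q" unfolding QC by (simp add: matrix_transpose_mul)
  have "0 \<le> v \<bullet> (Q *v v)" for v
  proof -
    have "v \<bullet> (Q *v v) = (C *v v) \<bullet> (C *v v)"
      unfolding QC by (simp add: matrix_vector_mul_assoc[symmetric] dot_mv'[symmetric])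
    then show ?thesis by simp
  qed
  then have Qp: "psd Q" using Qsym by (simp add: psd_def)
  interpret lq A B Q R by unfold_locales (rule Qp, rule Rpd)
  obtain K0 where K0: "schur_stable (A + B ** K0)" using stab unfolding stabilizable_def by blast
  obtain L where Ld: "schur_stable (A + L ** C)" using det unfolding detectable_def by blast
  obtain \<beta> where \<beta>: "\<And>k x. qf (Xk k) x \<le> \<beta> * (norm x)^2" using Xk_bound[OF K0] by blast
  have "\<exists>Xs. Xk \<longlonglongrightarrow> Xs" by (rule limit_exists[OF \<beta>]) blast
  then obtain Xs where lim: "Xk \<longlonglongrightarrow> Xs" by blast
  note XP = limit_props[OF lim]
  have uniq: "Y = Xs" if "psd Y" "Y = Ric A B Q R Y" for Y
    using unique_sol[OF lim Ld QC that(1)] that(2) by simp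
  define z where "z k = stackv (x k) (u k)" for k
  have xs: "x (Suc k) = transpose (Mab A B) *v z k" for k by (simp add: z_def Mab_stack dyn)
  have Hs: "H = S ** Mab A B"
  proof -
    have "H = (1 / real N) *\<^sub>R (\<Sum>k<N. outer (z k) (z k) ** Mab A B)"
      unfolding H_def xs outer_mv z_def ..
    also have "\<dots> = S ** Mab A B" unfolding S_def z_def sum_mm[symmetric] by (simp add: scalar_matrix_assoc)
    finally show ?thesis .
  qed
  have Ssym: "transpose S = S" by (rule pd_sym[OF Spd])
  note Sinv = pd_inv[OF Spd]
  define G where "G k = (if k = 0 then 0
                else blk11 (P k) - blk12 (P k) ** matrix_inv (blk22 (P k)) ** transpose (blk12 (P k)))" for k
  have Pform: "P (Suc k) = blockmat Q 0 0 R + Mab A B ** G k ** transpose (Mab A B)" for k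
  proof (rule cancel_S[OF Sinv(2) Sinv(1)])
    have "S ** P (Suc k) ** S = S ** blockmat Q 0 0 R ** S + H ** G k ** transpose H"
      using Pstep[of k] by (simp add: G_def)
    also have "\<dots> = S ** (blockmat Q 0 0 R + Mab A B ** G k ** transpose (Mab A B)) ** S"
      unfolding Hs matrix_transpose_mul Ssym
      by (simp add: matrix_add_ldistrib mm_add_r matrix_mul_assoc)
    finally show "S ** P (Suc k) ** S = S ** (blockmat Q 0 0 R + Mab A B ** G k ** transpose (Mab A B)) ** S" .
  qed
  have main: "P (Suc k) = Phi A B Q R (Xk k)" for k
  proof (induct k)
    case 0
    show ?case using Pform[of 0] Phi_eq[of Q R A B 0] by (simp add: G_def Xk_0)
  next
    case (Suc k)
    have "G (Suc k) = Ric A B Q R (Xk k)"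
      unfolding G_def using Suc schur_Phi[OF psd_sym[OF Xk_psd[of k]]] by simp
    then have "G (Suc k) = Xk (Suc k)" by (simp add: Xk_Suc)
    then show ?case using Pform[of "Suc k"] Phi_eq[of Q R A B "Xk (Suc k)"] by simp
  qed
  have Plim: "P \<longlonglongrightarrow> Phi A B Q R Xs"
  proof (rule LIMSEQ_imp_Suc)
    show "(\<lambda>k. P (Suc k)) \<longlonglongrightarrow> Phi A B Q R Xs" unfolding main by (rule tendsto_Phi[OF lim])
  qed
  show ?thesis
  proof (intro conjI allI impI)
    show "\<exists>!X. psd X \<and> X = transpose A ** X ** A
                - transpose A ** X ** B ** matrix_inv (R + transpose B ** X ** B) ** transpose B ** X ** A + Q"
    proof (rule ex1I[of _ Xs])
      show "psd Xs \<and> Xs = transpose A ** Xs ** A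
                - transpose A ** Xs ** B ** matrix_inv (R + transpose B ** Xs ** B) ** transpose B ** Xs ** A + Q"
        using XP(1,2) unfolding Ric_def by simp
      show "Y = Xs" if "psd Y \<and> Y = transpose A ** Y ** A
                - transpose A ** Y ** B ** matrix_inv (R + transpose B ** Y ** B) ** transpose B ** Y ** A + Q" for Y
        using that uniq unfolding Ric_def by blast
    qed
    fix X
    assume "psd X \<and> X = transpose A ** X ** A
                - transpose A ** X ** B ** matrix_inv (R + transpose B ** X ** B) ** transpose B ** X ** A + Q"
    then have "X = Xs" using uniq unfolding Ric_def by blast
    then show "P \<longlonglongrightarrow> blockmat (Q + transpose A ** X ** A) (transpose A ** X ** B)
                                   (transpose B ** X ** A) (R + transpose B ** X ** B)"
      using Plim unfolding Phi_def by simp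
  qed
qed

end
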